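(* Let $A$ be a pc monoid whose seminormalization $A\to A_{\mathrm{sn}}$ exists, let $I$ be an ideal of $A$, and set $J=\sqrt{IA_{\mathrm{sn}}}$. Then the induced map $A/I\to A_{\mathrm{sn}}/J$ is the seminormalization of $A/I$.
   Context: A monoid is a pointed commutative monoid. An ideal is a subset $I\ni0$ with $AI\subseteq I$; $A/I$ collapses $I$ to $0$; $IB$ is the ideal of $B$ generated by the image of $I$; $\sqrt{K}=\{b: b^n\in K\text{ for some }n\ge1\}$. pc: isomorphic to $C/I$ with $C$ cancellative ($ac=bc,c\ne0\Rightarrow a=b$). Reduced: $a^2=b^2,a^3=b^3\Rightarrow a=b$; $A_{\mathrm{red}}$ is $A$ modulo $a\sim b$ iff $a^n=b^n$ for all $n\gg0$. Seminormal: reduced and $x^3=y^2\Rightarrow x=z^2,y=z^3$ for some $z$. A seminormalization of $A$ is a map $A\to B$ with $B$ seminormal, $A_{\mathrm{red}}\to B$ injective, and $b^n\in A_{\mathrm{red}}$ for all $n\gg0$ for every $b\in B$. *)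

theory Defs
  imports Main
begin

record 'a pcm =
  mcarr :: "'a set"
  mmul  :: "'a \<Rightarrow> 'a \<Rightarrow> 'a"
  munit :: "'a"
  mzero :: "'a"

definition pcmon :: "'a pcm \<Rightarrow> bool" where
  "pcmon M \<longleftrightarrow>
     munit M \<in> mcarr M \<and> mzero M \<in> mcarr M \<and>
     (\<forall>a\<in>mcarr M. \<forall>b\<in>mcarr M. mmul M a b \<in> mcarr M) \<and>
     (\<forall>a\<in>mcarr M. \<forall>b\<in>mcarr M. \<forall>c\<in>mcarr M. mmul M (mmul M a b) c = mmul M a (mmul M b c)) \<and>
     (\<forall>a\<in>mcarr M. \<forall>b\<in>mcarr M. mmul M a b = mmul M b a) \<and>
     (\<forall>a\<in>mcarr M. mmul M (munit M) a = a) \<and>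
     (\<forall>a\<in>mcarr M. mmul M (mzero M) a = mzero M)"

primrec mpow :: "'a pcm \<Rightarrow> 'a \<Rightarrow> nat \<Rightarrow> 'a" where
  "mpow M a 0 = munit M"
| "mpow M a (Suc n) = mmul M a (mpow M a n)"

definition mon_hom :: "'a pcm \<Rightarrow> 'b pcm \<Rightarrow> ('a \<Rightarrow> 'b) \<Rightarrow> bool" where
  "mon_hom A B f \<longleftrightarrow>
     (\<forall>a\<in>mcarr A. f a \<in> mcarr B) \<and> f (munit A) = munit B \<and> f (mzero A) = mzero B \<and>
     (\<forall>a\<in>mcarr A. \<forall>b\<in>mcarr A. f (mmul A a b) = mmul B (f a) (f b))"

definition mon_iso :: "'a pcm \<Rightarrow> 'b pcm \<Rightarrow> ('a \<Rightarrow> 'b) \<Rightarrow> bool" where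
  "mon_iso A B f \<longleftrightarrow> mon_hom A B f \<and> bij_betw f (mcarr A) (mcarr B)"

definition mideal :: "'a pcm \<Rightarrow> 'a set \<Rightarrow> bool" where
  "mideal A I \<longleftrightarrow> I \<subseteq> mcarr A \<and> mzero A \<in> I \<and>
     (\<forall>a\<in>mcarr A. \<forall>i\<in>I. mmul A a i \<in> I)"

definition quot :: "'a pcm \<Rightarrow> 'a set \<Rightarrow> 'a pcm" where
  "quot A I = \<lparr> mcarr = (mcarr A - I) \<union> {mzero A},
               mmul = (\<lambda>x y. if mmul A x y \<in> I then mzero A else mmul A x y),
               munit = (if munit A \<in> I then mzero A else munit A),
               mzero = mzero A \<rparr>"

definition induced :: "'b pcm \<Rightarrow> 'b set \<Rightarrow> ('a \<Rightarrow> 'b) \<Rightarrow> 'a \<Rightarrow> 'b" where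
  "induced B J f x = (if f x \<in> J then mzero B else f x)"

definition ext_ideal :: "'b pcm \<Rightarrow> ('a \<Rightarrow> 'b) \<Rightarrow> 'a set \<Rightarrow> 'b set" where
  "ext_ideal B f I = \<Inter> {K. mideal B K \<and> f ` I \<subseteq> K}"

definition mrad :: "'a pcm \<Rightarrow> 'a set \<Rightarrow> 'a set" where
  "mrad B K = {b \<in> mcarr B. \<exists>n\<ge>1. mpow B b n \<in> K}"

definition cancellative :: "'a pcm \<Rightarrow> bool" where
  "cancellative C \<longleftrightarrow> (\<forall>a\<in>mcarr C. \<forall>b\<in>mcarr C. \<forall>c\<in>mcarr C.
      mmul C a c = mmul C b c \<and> c \<noteq> mzero C \<longrightarrow> a = b)"

text \<open>The type of C is passed as a parameter;
  an assumption pc TYPE('c) A with 'c free in a theorem amounts to existence of such a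
  presentation with C of some type.\<close>
definition pc :: "'c itself \<Rightarrow> 'a pcm \<Rightarrow> bool" where
  "pc T A \<longleftrightarrow> pcmon A \<and> (\<exists>(C::'c pcm) K h. pcmon C \<and> cancellative C \<and> mideal C K \<and>
       mon_iso (quot C K) A h)"

definition reduced :: "'a pcm \<Rightarrow> bool" where
  "reduced M \<longleftrightarrow> (\<forall>a\<in>mcarr M. \<forall>b\<in>mcarr M.
      mpow M a 2 = mpow M b 2 \<and> mpow M a 3 = mpow M b 3 \<longrightarrow> a = b)"

definition seminormal :: "'a pcm \<Rightarrow> bool" where
  "seminormal M \<longleftrightarrow> pcmon M \<and> reduced M \<and>
     (\<forall>x\<in>mcarr M. \<forall>y\<in>mcarr M. mpow M x 3 = mpow M y 2 \<longrightarrow>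
        (\<exists>z\<in>mcarr M. x = mpow M z 2 \<and> y = mpow M z 3))"

text \<open>f : A \<rightarrow> B is a seminormalization of A: B seminormal, the induced map
  A_red \<rightarrow> B is (well defined and) injective, i.e. f a = f b iff a^n = b^n for n \<gg> 0,
  and every b has b^n in the image of A_red (= image of A) for n \<gg> 0.\<close>
definition is_seminormalization :: "'a pcm \<Rightarrow> 'b pcm \<Rightarrow> ('a \<Rightarrow> 'b) \<Rightarrow> bool" where
  "is_seminormalization A B f \<longleftrightarrow> pcmon A \<and> mon_hom A B f \<and> seminormal B \<and>
     (\<forall>a\<in>mcarr A. \<forall>b\<in>mcarr A. f a = f b \<longleftrightarrow> (\<exists>N. \<forall>n\<ge>N. mpow A a n = mpow A b n)) \<and>
     (\<forall>b\<in>mcarr B. \<exists>N. \<forall>n\<ge>N. mpow B b n \<in> f ` mcarr A)"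

end

theory Submission
  imports Defs
begin

lemma pcmonD:
  assumes "pcmon M"
  shows "munit M \<in> mcarr M" "mzero M \<in> mcarr M"
    "\<And>a b. a \<in> mcarr M \<Longrightarrow> b \<in> mcarr M \<Longrightarrow> mmul M a b \<in> mcarr M"
    "\<And>a b c. a \<in> mcarr M \<Longrightarrow> b \<in> mcarr M \<Longrightarrow> c \<in> mcarr M \<Longrightarrow> mmul M (mmul M a b) c = mmul M a (mmul M b c)"
    "\<And>a b. a \<in> mcarr M \<Longrightarrow> b \<in> mcarr M \<Longrightarrow> mmul M a b = mmul M b a"
    "\<And>a. a \<in> mcarr M \<Longrightarrow> mmul M (munit M) a = a"
    "\<And>a. a \<in> mcarr M \<Longrightarrow> mmul M (mzero M) a = mzero M"
  using assms unfolding pcmon_def by auto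

lemma pcmon_unit_r: "pcmon M \<Longrightarrow> a \<in> mcarr M \<Longrightarrow> mmul M a (munit M) = a"
  by (metis pcmonD(1,5,6))
lemma pcmon_zero_r: "pcmon M \<Longrightarrow> a \<in> mcarr M \<Longrightarrow> mmul M a (mzero M) = mzero M"
  by (metis pcmonD(2,5,7))

lemma mpow_closed: "pcmon M \<Longrightarrow> a \<in> mcarr M \<Longrightarrow> mpow M a n \<in> mcarr M"
  by (induct n) (auto simp: pcmonD)

lemma mpow_add: assumes "pcmon M" "a \<in> mcarr M"
  shows "mpow M a (m+n) = mmul M (mpow M a m) (mpow M a n)"
  by (induct m) (simp_all add: pcmonD(1-4,6,7)[OF assms(1)] mpow_closed[OF assms] assms)

lemma mpow_mult: assumes "pcmon M" "a \<in> mcarr M"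
  shows "mpow M a (m*n) = mpow M (mpow M a m) n"
  by (induct n) (simp_all add: mpow_add[OF assms])

lemma mswap: assumes "pcmon M" "x \<in> mcarr M" "y \<in> mcarr M" "z \<in> mcarr M" "w \<in> mcarr M"
  shows "mmul M (mmul M x y) (mmul M z w) = mmul M (mmul M x z) (mmul M y w)"
proof -
  note D = pcmonD[OF assms(1)]
  have "mmul M (mmul M x y) (mmul M z w) = mmul M x (mmul M y (mmul M z w))"
    using assms by (simp add: D(1-4,6,7))
  also have "\<dots> = mmul M x (mmul M (mmul M y z) w)" using assms by (simp add: D(1-4,6,7))
  also have "\<dots> = mmul M x (mmul M (mmul M z y) w)" using assms D(5)[of y z] by simp
  also have "\<dots> = mmul M x (mmul M z (mmul M y w))" using assms by (simp add: D(1-4,6,7))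
  also have "\<dots> = mmul M (mmul M x z) (mmul M y w)" using assms by (simp add: D(1-4,6,7))
  finally show ?thesis .
qed

lemma mpow_distrib: assumes "pcmon M" "a \<in> mcarr M" "b \<in> mcarr M"
  shows "mpow M (mmul M a b) n = mmul M (mpow M a n) (mpow M b n)"
  by (induct n) (simp_all add: pcmonD(1-4,6,7)[OF assms(1)] mswap mpow_closed assms)

lemma mpow_zero: "pcmon M \<Longrightarrow> n \<ge> 1 \<Longrightarrow> mpow M (mzero M) n = mzero M"
  by (cases n) (auto simp: pcmonD mpow_closed)

lemma mideal_mul_r: "mideal M I \<Longrightarrow> pcmon M \<Longrightarrow> i \<in> I \<Longrightarrow> a \<in> mcarr M \<Longrightarrow> mmul M i a \<in> I"
  unfolding mideal_def by (metis pcmonD(5) subsetD)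

lemma mideal_mul_l: "mideal M I \<Longrightarrow> i \<in> I \<Longrightarrow> a \<in> mcarr M \<Longrightarrow> mmul M a i \<in> I"
  unfolding mideal_def by blast

lemma mideal_sub: "mideal M I \<Longrightarrow> x \<in> I \<Longrightarrow> x \<in> mcarr M"
  unfolding mideal_def by blast

lemma mideal_pow: "mideal M I \<Longrightarrow> pcmon M \<Longrightarrow> i \<in> I \<Longrightarrow> n \<ge> 1 \<Longrightarrow> mpow M i n \<in> I"
  by (cases n) (auto intro: mideal_mul_r mpow_closed mideal_sub)

lemma mideal_pow_mono: assumes "mideal M I" "pcmon M" "a \<in> mcarr M" "mpow M a n \<in> I" "n \<le> m"
  shows "mpow M a m \<in> I"
proof -
  have "mpow M a m = mmul M (mpow M a (m-n)) (mpow M a n)"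
    using mpow_add[OF assms(2,3), of "m-n" n] assms(5) by simp
  thus ?thesis using mideal_mul_l[OF assms(1,4)] mpow_closed[OF assms(2,3)] by simp
qed

lemma mideal_unit: "mideal M I \<Longrightarrow> pcmon M \<Longrightarrow> munit M \<in> I \<Longrightarrow> a \<in> mcarr M \<Longrightarrow> a \<in> I"
  by (metis mideal_mul_l pcmon_unit_r)


lemma pcmon_quot: assumes "pcmon M" "mideal M I" shows "pcmon (quot M I)"
proof -
  note D = pcmonD[OF assms(1)]
  have Z: "mzero M \<in> I" using assms(2) mideal_def by blast
  have X: "mmul M a (mmul M b c) \<in> I" if "a \<in> mcarr M" "b \<in> mcarr M" "c \<in> mcarr M" "mmul M a b \<in> I" for a b c
    using mideal_mul_r[OF assms(2,1) that(4) that(3)] D(4) that by simp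
  show ?thesis
    unfolding pcmon_def quot_def
    using D(1-4,6,7) D(5) X Z mideal_mul_l[OF assms(2)] mideal_mul_r[OF assms(2,1)] pcmon_zero_r[OF assms(1)]
      mideal_unit[OF assms(2,1)] pcmon_unit_r[OF assms(1)]
    by auto
qed

lemma mpow_quot: assumes "pcmon M" "mideal M I" "a \<in> mcarr M" "n \<ge> 1"
  shows "mpow (quot M I) a n = (if mpow M a n \<in> I then mzero M else mpow M a n)"
  using assms(4)
proof (induct n)
  case 0 then show ?case by simp
next
  case (Suc n)
  have Z: "mzero M \<in> I" using assms(2) mideal_def by blast
  show ?case
  proof (cases "n = 0")
    case True
    then show ?thesis using Z assms mideal_unit[OF assms(2,1)] pcmon_zero_r[OF assms(1)] pcmon_unit_r[OF assms(1)]
      by (auto simp: quot_def)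
  next
    case False
    then have IH: "mpow (quot M I) a n = (if mpow M a n \<in> I then mzero M else mpow M a n)"
      using Suc by simp
    show ?thesis using IH Z pcmon_zero_r[OF assms(1) assms(3)]
      mideal_mul_l[OF assms(2), of "mpow M a n" a] assms(3)
      by (auto simp: quot_def)
  qed
qed

lemma hom_pow: "mon_hom A B f \<Longrightarrow> pcmon A \<Longrightarrow> a \<in> mcarr A \<Longrightarrow> f (mpow A a n) = mpow B (f a) n"
  by (induct n) (auto simp: mon_hom_def mpow_closed)

lemma mrad_ideal: assumes "pcmon B" "mideal B K" shows "mideal B (mrad B K)"
proof -
  have "mzero B \<in> mrad B K"
    using assms pcmonD(2)[OF assms(1)] mpow_zero[OF assms(1), of 1] unfolding mrad_def mideal_def
    by (intro CollectI conjI exI[of _ 1]) auto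
  moreover have "mmul B a i \<in> mrad B K" if "a \<in> mcarr B" "i \<in> mrad B K" for a i
  proof -
    note that0 = that
    obtain n where n: "n \<ge> 1" "mpow B i n \<in> K" "i \<in> mcarr B" using that0(2) unfolding mrad_def by auto
    have "mpow B (mmul B a i) n = mmul B (mpow B a n) (mpow B i n)"
      using mpow_distrib[OF assms(1) that(1) n(3)] .
    also have "\<dots> \<in> K" using mideal_mul_l[OF assms(2) n(2) mpow_closed[OF assms(1) that(1)]] .
    finally show ?thesis using n that pcmonD(3)[OF assms(1)] unfolding mrad_def by auto
  qed
  ultimately show ?thesis unfolding mideal_def mrad_def by auto
qed

lemma mrad_sup: assumes "pcmon B" "mideal B K" shows "K \<subseteq> mrad B K"
proof
  fix x assume x: "x \<in> K"
  have xc: "x \<in> mcarr B" using mideal_sub[OF assms(2) x] .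
  have "mpow B x 1 = x" using pcmon_unit_r[OF assms(1) xc] by simp
  thus "x \<in> mrad B K" unfolding mrad_def using x xc by (intro CollectI conjI exI[of _ 1]) auto
qed

lemma mrad_pow: assumes "pcmon B" "a \<in> mcarr B" "n \<ge> 1" "mpow B a n \<in> mrad B K"
  shows "a \<in> mrad B K"
proof -
  obtain m where m: "m \<ge> 1" "mpow B (mpow B a n) m \<in> K" using assms(4) unfolding mrad_def by auto
  have "mpow B a (n*m) \<in> K" using m mpow_mult[OF assms(1,2)] by simp
  moreover have "n*m \<ge> 1" using m assms(3) by simp
  ultimately show ?thesis using assms(2) unfolding mrad_def by blast
qed

lemma ext_ideal_desc:
  assumes pA: "pcmon A" and pB: "pcmon B" and hf: "mon_hom A B f" and I: "mideal A I"
  shows "ext_ideal B f I = {mmul B c (f i) | c i. c \<in> mcarr B \<and> i \<in> I}"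
    "mideal B {mmul B c (f i) | c i. c \<in> mcarr B \<and> i \<in> I}"
    "f ` I \<subseteq> {mmul B c (f i) | c i. c \<in> mcarr B \<and> i \<in> I}"
proof -
  let ?S = "{mmul B c (f i) | c i. c \<in> mcarr B \<and> i \<in> I}"
  note D = pcmonD[OF pB]
  have fc: "f i \<in> mcarr B" if "i \<in> I" for i using hf that mideal_sub[OF I] unfolding mon_hom_def by blast
  have z: "mzero A \<in> I" "f (mzero A) = mzero B" using I hf unfolding mideal_def mon_hom_def by auto
  show Sid: "mideal B ?S"
    unfolding mideal_def
  proof (intro conjI ballI)
    show "?S \<subseteq> mcarr B" using D fc by auto
    have "mzero B = mmul B (mzero B) (f (mzero A))" using z D(2,7) by simp
    thus "mzero B \<in> ?S" using D(2) z(1) by blast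
    fix a x assume a: "a \<in> mcarr B" and x: "x \<in> ?S"
    then obtain c i where ci: "c \<in> mcarr B" "i \<in> I" "x = mmul B c (f i)" by auto
    have "mmul B a x = mmul B (mmul B a c) (f i)" using ci a fc D(4) by simp
    thus "mmul B a x \<in> ?S" using ci a
      by (intro CollectI exI[of _ "mmul B a c"] exI[of _ i]) (simp add: D(3))
  qed
  show fS: "f ` I \<subseteq> ?S"
  proof
    fix y assume "y \<in> f ` I"
    then obtain i where "i \<in> I" "y = f i" by auto
    moreover have "f i = mmul B (munit B) (f i)" using D(6) fc \<open>i \<in> I\<close> by simp
    ultimately show "y \<in> ?S" using D(1) by blast
  qed
  show "ext_ideal B f I = ?S"
  proof
    show "ext_ideal B f I \<subseteq> ?S" unfolding ext_ideal_def using Sid fS by (intro Inter_lower) simp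
    show "?S \<subseteq> ext_ideal B f I" unfolding ext_ideal_def
    proof (intro subsetI InterI)
      fix x K assume x: "x \<in> ?S" and K: "K \<in> {K. mideal B K \<and> f ` I \<subseteq> K}"
      then obtain c i where ci: "c \<in> mcarr B" "i \<in> I" "x = mmul B c (f i)" by auto
      have "mideal B K" "f i \<in> K" using K ci(2) by auto
      thus "x \<in> K" using mideal_mul_l ci by metis
    qed
  qed
qed

theorem lemma1p14:
  fixes A :: "'a pcm" and Asn :: "'b pcm" and f :: "'a \<Rightarrow> 'b" and I :: "'a set"
  assumes "pc TYPE('c) A"
    and "is_seminormalization A Asn f"
    and "mideal A I"
  shows "is_seminormalization (quot A I)
           (quot Asn (mrad Asn (ext_ideal Asn f I)))
           (induced Asn (mrad Asn (ext_ideal Asn f I)) f)"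
proof -
  note S = assms(2)[unfolded is_seminormalization_def]
  note pA = conjunct1[OF S]
  note hf = conjunct1[OF conjunct2[OF S]]
  note sn = conjunct1[OF conjunct2[OF conjunct2[OF S]]]
  note hinj = conjunct1[OF conjunct2[OF conjunct2[OF conjunct2[OF S]]]]
  note hsurj = conjunct2[OF conjunct2[OF conjunct2[OF conjunct2[OF S]]]]
  note SN = sn[unfolded seminormal_def]
  note pB = conjunct1[OF SN]
  note red = conjunct1[OF conjunct2[OF SN]]
  note snp = conjunct2[OF conjunct2[OF SN]]
  note IA = assms(3)
  define K where "K = ext_ideal Asn f I"
  define J where "J = mrad Asn K"
  have fcar: "\<And>a. a \<in> mcarr A \<Longrightarrow> f a \<in> mcarr Asn" using hf unfolding mon_hom_def by blast
  have f0: "f (mzero A) = mzero Asn" and f1: "f (munit A) = munit Asn"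
    and fmul: "\<And>a b. a \<in> mcarr A \<Longrightarrow> b \<in> mcarr A \<Longrightarrow> f (mmul A a b) = mmul Asn (f a) (f b)"
    using hf unfolding mon_hom_def by auto
  have Kdesc: "K = {mmul Asn c (f i) | c i. c \<in> mcarr Asn \<and> i \<in> I}" and Kid: "mideal Asn K"
    and fIK: "f ` I \<subseteq> K"
    using ext_ideal_desc[OF pA pB hf IA] unfolding K_def by simp_all
  have Jid: "mideal Asn J" unfolding J_def using mrad_ideal[OF pB Kid] .
  have KJ: "K \<subseteq> J" unfolding J_def using mrad_sup[OF pB Kid] .
  have Jrad: "\<And>a n. a \<in> mcarr Asn \<Longrightarrow> n \<ge> 1 \<Longrightarrow> mpow Asn a n \<in> J \<Longrightarrow> a \<in> J"
    unfolding J_def by (rule mrad_pow[OF pB])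
  have J0: "mzero Asn \<in> J" using Jid unfolding mideal_def by blast
  have I0: "mzero A \<in> I" using IA unfolding mideal_def by blast
  have key: "f a \<in> J \<longleftrightarrow> (\<exists>n\<ge>1. mpow A a n \<in> I)" if a: "a \<in> mcarr A" for a
  proof
    assume "f a \<in> J"
    then obtain n where n: "n\<ge>1" "mpow Asn (f a) n \<in> K" unfolding J_def mrad_def by auto
    then obtain c i where c: "c \<in> mcarr Asn" "i \<in> I" "mpow Asn (f a) n = mmul Asn c (f i)"
      using Kdesc by auto
    have iA: "i \<in> mcarr A" using mideal_sub[OF IA c(2)] .
    obtain N where N: "\<forall>m\<ge>N. mpow Asn c m \<in> f ` mcarr A" using hsurj c by auto
    define M where "M = max N 1"
    have "M \<ge> N" using M_def by simp
    then have "mpow Asn c M \<in> f ` mcarr A" using N by blast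
    then obtain a' where a': "a' \<in> mcarr A" "mpow Asn c M = f a'" by (metis imageE)
    have M1: "M \<ge> 1" using M_def by simp
    have iM: "mpow A i M \<in> I" using mideal_pow[OF IA pA c(2) M1] .
    have x: "mmul A a' (mpow A i M) \<in> I" using mideal_mul_l[OF IA iM a'(1)] .
    have "f (mpow A a (n*M)) = mpow Asn (f a) (n*M)" using hom_pow[OF hf pA a] .
    also have "\<dots> = mpow Asn (mmul Asn c (f i)) M" using mpow_mult[OF pB fcar[OF a]] c(3) by simp
    also have "\<dots> = mmul Asn (f a') (f (mpow A i M))"
      using mpow_distrib[OF pB c(1) fcar[OF iA]] a'(2) hom_pow[OF hf pA iA] by simp
    also have "\<dots> = f (mmul A a' (mpow A i M))" using fmul[OF a'(1) mpow_closed[OF pA iA]] by simp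
    finally have "f (mpow A a (n*M)) = f (mmul A a' (mpow A i M))" .
    then obtain N' where N': "\<forall>m\<ge>N'. mpow A (mpow A a (n*M)) m = mpow A (mmul A a' (mpow A i M)) m"
      using hinj[rule_format, OF mpow_closed[OF pA a] mideal_sub[OF IA x]] by blast
    define m where "m = max N' 1"
    have m1: "m \<ge> 1" using m_def by simp
    have "mpow A a (n*M*m) = mpow A (mmul A a' (mpow A i M)) m"
      using N' m_def mpow_mult[OF pA a, of "n*M" m] by simp
    also have "\<dots> \<in> I" using mideal_pow[OF IA pA x m1] .
    finally have "mpow A a (n*M*m) \<in> I" .
    moreover have "n*M*m \<ge> 1" using n(1) M1 m1 by simp
    ultimately show "\<exists>n\<ge>1. mpow A a n \<in> I" by blast
  next
    assume "\<exists>n\<ge>1. mpow A a n \<in> I"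
    then obtain n where n: "n \<ge> 1" "mpow A a n \<in> I" by auto
    have "mpow Asn (f a) n \<in> K" using hom_pow[OF hf pA a, of n] n fIK by auto
    thus "f a \<in> J" using n(1) fcar[OF a] unfolding J_def mrad_def by auto
  qed
  have Jcar: "J \<subseteq> mcarr Asn" using Jid unfolding mideal_def by blast
  have ICar: "I \<subseteq> mcarr A" using IA unfolding mideal_def by blast
  let ?g = "induced Asn J f"
  have gdef: "\<And>x. ?g x = (if f x \<in> J then mzero Asn else f x)" by (simp add: induced_def)
  have qAcar: "\<And>x. x \<in> mcarr (quot A I) \<longleftrightarrow> (x \<in> mcarr A \<and> x \<notin> I) \<or> x = mzero A"
    by (auto simp: quot_def)
  have qBcar: "\<And>x. x \<in> mcarr (quot Asn J) \<longleftrightarrow> (x \<in> mcarr Asn \<and> x \<notin> J) \<or> x = mzero Asn"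
    by (auto simp: quot_def)
  have qApow: "\<And>x n. x \<in> mcarr A \<Longrightarrow> n \<ge> 1 \<Longrightarrow>
      mpow (quot A I) x n = (if mpow A x n \<in> I then mzero A else mpow A x n)"
    using mpow_quot[OF pA IA] by blast
  have qBpow: "\<And>x n. x \<in> mcarr Asn \<Longrightarrow> n \<ge> 1 \<Longrightarrow>
      mpow (quot Asn J) x n = (if mpow Asn x n \<in> J then mzero Asn else mpow Asn x n)"
    using mpow_quot[OF pB Jid] by blast
  have A0: "mzero A \<in> mcarr A" and B0: "mzero Asn \<in> mcarr Asn"
    using pcmonD(2)[OF pA] pcmonD(2)[OF pB] .
  have Jiff: "x \<in> J \<longleftrightarrow> mpow (quot Asn J) x n = mzero Asn" if x: "x \<in> mcarr Asn" and n: "n \<ge> 1" for x n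
  proof
    assume "x \<in> J" then show "mpow (quot Asn J) x n = mzero Asn"
      using qBpow[OF x n] mideal_pow[OF Jid pB _ n] by simp
  next
    assume h: "mpow (quot Asn J) x n = mzero Asn"
    show "x \<in> J"
    proof (rule ccontr)
      assume "x \<notin> J"
      then have "mpow Asn x n \<notin> J" using Jrad[OF x n] by blast
      then show False using h qBpow[OF x n] J0 by auto
    qed
  qed
  have Iiff: "f x \<in> J \<longleftrightarrow> mpow (quot A I) x n = mzero A" if x: "x \<in> mcarr A" and n: "n \<ge> 1"
    and big: "\<forall>m. m \<ge> 1 \<longrightarrow> mpow A x m \<in> I \<longrightarrow> m \<le> n" for x n
  proof
    assume "f x \<in> J"
    then obtain m where m: "m \<ge> 1" "mpow A x m \<in> I" using key[OF x] by blast
    then have "mpow A x n \<in> I" using mideal_pow_mono[OF IA pA x m(2)] big by blast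
    then show "mpow (quot A I) x n = mzero A" using qApow[OF x n] by simp
  next
    assume h: "mpow (quot A I) x n = mzero A"
    have "mpow A x n \<in> I" using h qApow[OF x n] I0 by (auto split: if_splits)
    then show "f x \<in> J" using key[OF x] n by blast
  qed
  have P1: "pcmon (quot A I)" by (rule pcmon_quot[OF pA IA])
  have P2: "mon_hom (quot A I) (quot Asn J) ?g"
    unfolding mon_hom_def
  proof (intro conjI ballI)
    fix a assume "a \<in> mcarr (quot A I)"
    then have a: "a \<in> mcarr A" using A0 qAcar by blast
    show "?g a \<in> mcarr (quot Asn J)" using fcar[OF a] B0 qBcar gdef by auto
  next
    show "?g (munit (quot A I)) = munit (quot Asn J)"
    proof (cases "munit A \<in> I")
      case True
      have "mpow A (munit A) 1 = munit A" using pcmon_unit_r[OF pA pcmonD(1)[OF pA]] by simp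
      then have "f (munit A) \<in> J" using key[OF pcmonD(1)[OF pA]] True by (metis le_refl)
      then show ?thesis using True f0 f1 J0 by (simp add: quot_def gdef)
    next
      case False
      then show ?thesis using f1 by (simp add: quot_def gdef)
    qed
  next
    show "?g (mzero (quot A I)) = mzero (quot Asn J)" using f0 J0 by (simp add: quot_def gdef)
  next
    fix a b assume "a \<in> mcarr (quot A I)" "b \<in> mcarr (quot A I)"
    then have a: "a \<in> mcarr A" and b: "b \<in> mcarr A" using A0 qAcar by blast+
    have fab: "f (mmul A a b) = mmul Asn (f a) (f b)" using fmul a b .
    show "?g (mmul (quot A I) a b) = mmul (quot Asn J) (?g a) (?g b)"
    proof (cases "f a \<in> J \<or> f b \<in> J")
      case True
      then have "f (mmul A a b) \<in> J"
        using fab mideal_mul_l[OF Jid] mideal_mul_r[OF Jid pB] fcar a b by auto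
      moreover have "mmul Asn (?g a) (?g b) = mzero Asn"
        using True pcmonD(7)[OF pB] pcmon_zero_r[OF pB] fcar a b gdef B0 by auto
      ultimately show ?thesis using J0 f0 by (simp add: quot_def gdef)
    next
      case False
      show ?thesis
      proof (cases "mmul A a b \<in> I")
        case True
        then have "f (mmul A a b) \<in> J" using KJ fIK by blast
        then show ?thesis using False True f0 J0 fab by (simp add: quot_def gdef)
      next
        case F2: False
        then show ?thesis using False fab by (simp add: quot_def gdef)
      qed
    qed
  qed
  have P3: "seminormal (quot Asn J)"
    unfolding seminormal_def
  proof (intro conjI ballI impI)
    show "pcmon (quot Asn J)" by (rule pcmon_quot[OF pB Jid])
    show "reduced (quot Asn J)" unfolding reduced_def
    proof (intro ballI impI)
      fix a b assume a: "a \<in> mcarr (quot Asn J)" and b: "b \<in> mcarr (quot Asn J)"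
        and h: "mpow (quot Asn J) a 2 = mpow (quot Asn J) b 2 \<and> mpow (quot Asn J) a 3 = mpow (quot Asn J) b 3"
      have ac: "a \<in> mcarr Asn" and bc: "b \<in> mcarr Asn" using a b qBcar B0 by blast+
      have ab: "a \<in> J \<longleftrightarrow> b \<in> J" using Jiff[OF ac, of 2] Jiff[OF bc, of 2] h by simp
      show "a = b"
      proof (cases "a \<in> J")
        case True
        then show ?thesis using ab a b qBcar by blast
      next
        case False
        then have "mpow Asn a 2 \<notin> J" "mpow Asn a 3 \<notin> J" "mpow Asn b 2 \<notin> J" "mpow Asn b 3 \<notin> J"
          using Jrad ac bc ab by (meson one_le_numeral)+
        then have "mpow Asn a 2 = mpow Asn b 2" "mpow Asn a 3 = mpow Asn b 3"
          using h qBpow[OF ac] qBpow[OF bc] by simp_all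
        then show ?thesis using red ac bc unfolding reduced_def by blast
      qed
    qed
    fix x y assume x: "x \<in> mcarr (quot Asn J)" and y: "y \<in> mcarr (quot Asn J)"
      and h: "mpow (quot Asn J) x 3 = mpow (quot Asn J) y 2"
    have xc: "x \<in> mcarr Asn" and yc: "y \<in> mcarr Asn" using x y qBcar B0 by blast+
    have xy: "x \<in> J \<longleftrightarrow> y \<in> J" using Jiff[OF xc, of 3] Jiff[OF yc, of 2] h by simp
    show "\<exists>z\<in>mcarr (quot Asn J). x = mpow (quot Asn J) z 2 \<and> y = mpow (quot Asn J) z 3"
    proof (cases "x \<in> J")
      case True
      then have "x = mzero Asn" "y = mzero Asn" using xy x y qBcar by blast+
      moreover have "mpow (quot Asn J) (mzero Asn) 2 = mzero Asn" "mpow (quot Asn J) (mzero Asn) 3 = mzero Asn"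
        using Jiff[OF B0] J0 by auto
      moreover have "mzero Asn \<in> mcarr (quot Asn J)" using qBcar by blast
      ultimately show ?thesis by metis
    next
      case False
      then have "mpow Asn x 3 \<notin> J" "mpow Asn y 2 \<notin> J"
        using Jrad xc yc xy by (meson one_le_numeral)+
      then have "mpow Asn x 3 = mpow Asn y 2" using h qBpow[OF xc] qBpow[OF yc] by simp
      then obtain z where z: "z \<in> mcarr Asn" "x = mpow Asn z 2" "y = mpow Asn z 3"
        using snp xc yc by blast
      have zJ: "z \<notin> J" using False z(2) mideal_pow[OF Jid pB, of z 2] by auto
      have "mpow Asn z 2 \<notin> J" "mpow Asn z 3 \<notin> J" using Jrad[OF z(1)] zJ by (meson one_le_numeral)+
      then have "x = mpow (quot Asn J) z 2" "y = mpow (quot Asn J) z 3"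
        using z qBpow[OF z(1)] by simp_all
      moreover have "z \<in> mcarr (quot Asn J)" using z(1) zJ qBcar by blast
      ultimately show ?thesis by blast
    qed
  qed
  have P4: "\<forall>a\<in>mcarr (quot A I). \<forall>b\<in>mcarr (quot A I). ?g a = ?g b \<longleftrightarrow>
      (\<exists>N. \<forall>n\<ge>N. mpow (quot A I) a n = mpow (quot A I) b n)"
  proof (intro ballI)
    fix a b assume "a \<in> mcarr (quot A I)" "b \<in> mcarr (quot A I)"
    then have a: "a \<in> mcarr A" and b: "b \<in> mcarr A" using A0 qAcar by blast+
    have ev: "\<exists>N\<ge>1. \<forall>n\<ge>N. mpow (quot A I) x n = mzero A" if x: "x \<in> mcarr A" "f x \<in> J" for x
    proof -
      obtain m where m: "m \<ge> 1" "mpow A x m \<in> I" using key[OF x(1)] x(2) by blast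
      have "\<forall>n\<ge>m. mpow (quot A I) x n = mzero A"
        using qApow[OF x(1)] mideal_pow_mono[OF IA pA x(1) m(2)] m(1) by simp
      thus ?thesis using m(1) by blast
    qed
    have nev: "mpow (quot A I) x n \<noteq> mzero A" if x: "x \<in> mcarr A" "f x \<notin> J" and n: "n \<ge> 1" for x n
    proof -
      have "mpow A x n \<notin> I" using key[OF x(1)] x(2) n by blast
      moreover have "mpow A x n \<noteq> mzero A" using calculation I0 by force
      ultimately show ?thesis using qApow[OF x(1) n] by simp
    qed
    show "?g a = ?g b \<longleftrightarrow> (\<exists>N. \<forall>n\<ge>N. mpow (quot A I) a n = mpow (quot A I) b n)"
    proof (cases "f a \<in> J"; cases "f b \<in> J")
      assume fa: "f a \<in> J" and fb: "f b \<in> J"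
      obtain N1 where N1: "\<forall>n\<ge>N1. mpow (quot A I) a n = mzero A" using ev[OF a fa] by blast
      obtain N2 where N2: "\<forall>n\<ge>N2. mpow (quot A I) b n = mzero A" using ev[OF b fb] by blast
      have "\<forall>n\<ge>max N1 N2. mpow (quot A I) a n = mpow (quot A I) b n" using N1 N2 by simp
      moreover have "?g a = ?g b" using fa fb gdef by simp
      ultimately show ?thesis by blast
    next
      assume fa: "f a \<in> J" and fb: "f b \<notin> J"
      obtain N1 where N1: "N1 \<ge> 1" "\<forall>n\<ge>N1. mpow (quot A I) a n = mzero A" using ev[OF a fa] by blast
      have "\<not> (\<exists>N. \<forall>n\<ge>N. mpow (quot A I) a n = mpow (quot A I) b n)"
      proof
        assume "\<exists>N. \<forall>n\<ge>N. mpow (quot A I) a n = mpow (quot A I) b n"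
        then obtain N where N: "\<forall>n\<ge>N. mpow (quot A I) a n = mpow (quot A I) b n" by blast
        have "mpow (quot A I) b (max N N1) = mzero A" using N N1 by (metis max.cobounded1 max.cobounded2)
        moreover have "max N N1 \<ge> 1" using N1 by simp
        ultimately show False using nev[OF b fb] by blast
      qed
      moreover have "?g a \<noteq> ?g b" using fa fb gdef J0 by auto
      ultimately show ?thesis by blast
    next
      assume fa: "f a \<notin> J" and fb: "f b \<in> J"
      obtain N1 where N1: "N1 \<ge> 1" "\<forall>n\<ge>N1. mpow (quot A I) b n = mzero A" using ev[OF b fb] by blast
      have "\<not> (\<exists>N. \<forall>n\<ge>N. mpow (quot A I) a n = mpow (quot A I) b n)"
      proof
        assume "\<exists>N. \<forall>n\<ge>N. mpow (quot A I) a n = mpow (quot A I) b n"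
        then obtain N where N: "\<forall>n\<ge>N. mpow (quot A I) a n = mpow (quot A I) b n" by blast
        have "mpow (quot A I) a (max N N1) = mzero A" using N N1 by (metis max.cobounded1 max.cobounded2)
        moreover have "max N N1 \<ge> 1" using N1 by simp
        ultimately show False using nev[OF a fa] by blast
      qed
      moreover have "?g a \<noteq> ?g b" using fa fb gdef J0 by auto
      ultimately show ?thesis by blast
    next
      assume fa: "f a \<notin> J" and fb: "f b \<notin> J"
      have eqA: "mpow (quot A I) x n = mpow A x n" if x: "x \<in> mcarr A" "f x \<notin> J" and n: "n \<ge> 1" for x n
        using qApow[OF x(1) n] key[OF x(1)] x(2) n by auto
      have "(\<exists>N. \<forall>n\<ge>N. mpow A a n = mpow A b n) \<longleftrightarrow> (\<exists>N. \<forall>n\<ge>N. mpow (quot A I) a n = mpow (quot A I) b n)"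
      proof
        assume "\<exists>N. \<forall>n\<ge>N. mpow A a n = mpow A b n"
        then obtain N where N: "\<forall>n\<ge>N. mpow A a n = mpow A b n" by blast
        have "\<forall>n\<ge>max N 1. mpow (quot A I) a n = mpow (quot A I) b n"
          using N eqA[OF a fa] eqA[OF b fb] by simp
        then show "\<exists>N. \<forall>n\<ge>N. mpow (quot A I) a n = mpow (quot A I) b n" by blast
      next
        assume "\<exists>N. \<forall>n\<ge>N. mpow (quot A I) a n = mpow (quot A I) b n"
        then obtain N where N: "\<forall>n\<ge>N. mpow (quot A I) a n = mpow (quot A I) b n" by blast
        have "\<forall>n\<ge>max N 1. mpow A a n = mpow A b n"
          using N eqA[OF a fa] eqA[OF b fb] by (metis max.bounded_iff)
        then show "\<exists>N. \<forall>n\<ge>N. mpow A a n = mpow A b n" by blast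
      qed
      moreover have "?g a = ?g b \<longleftrightarrow> f a = f b" using fa fb gdef by simp
      ultimately show ?thesis using hinj a b by blast
    qed
  qed
  have P5: "\<forall>b\<in>mcarr (quot Asn J). \<exists>N. \<forall>n\<ge>N. mpow (quot Asn J) b n \<in> ?g ` mcarr (quot A I)"
  proof
    fix b assume b: "b \<in> mcarr (quot Asn J)"
    have bc: "b \<in> mcarr Asn" using b qBcar B0 by blast
    have g0: "?g (mzero A) = mzero Asn" using f0 J0 gdef by simp
    have A0q: "mzero A \<in> mcarr (quot A I)" using qAcar by blast
    show "\<exists>N. \<forall>n\<ge>N. mpow (quot Asn J) b n \<in> ?g ` mcarr (quot A I)"
    proof (cases "b \<in> J")
      case True
      have "\<forall>n\<ge>1. mpow (quot Asn J) b n \<in> ?g ` mcarr (quot A I)"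
        using Jiff[OF bc] True g0 A0q by (metis image_eqI)
      then show ?thesis by blast
    next
      case False
      obtain N where N: "\<forall>n\<ge>N. mpow Asn b n \<in> f ` mcarr A" using hsurj bc by blast
      have "mpow (quot Asn J) b n \<in> ?g ` mcarr (quot A I)" if n: "n \<ge> max N 1" for n
      proof -
        have n1: "n \<ge> 1" and nN: "n \<ge> N" using n by auto
        obtain a where a: "a \<in> mcarr A" "mpow Asn b n = f a" using N nN by (metis imageE)
        have bnJ: "mpow Asn b n \<notin> J" using Jrad[OF bc n1] False by blast
        have "mpow A a 1 = a" using pcmon_unit_r[OF pA a(1)] by simp
        then have aI: "a \<notin> I" using key[OF a(1)] bnJ a(2) by (metis le_refl)
        have "?g a = mpow Asn b n" using gdef a(2) bnJ by simp
        also have "\<dots> = mpow (quot Asn J) b n" using qBpow[OF bc n1] bnJ by simp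
        finally show ?thesis using a(1) aI qAcar by (metis image_eqI)
      qed
      then show ?thesis by blast
    qed
  qed
  show ?thesis unfolding K_def[symmetric] J_def[symmetric] is_seminormalization_def
    using P1 P2 P3 P4 P5 by (intro conjI) assumption+
qed

end
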